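(* Let $D:\mathbf{Sets}\to\mathbf{cMet}_1$ send a set $X$ to $X$ with the discrete metric ($d(x,y)=1$ for $x\ne y$, $d(x,x)=0$) and a function to itself. Then $\mathbf{CMT}(D X)=\mathbf{U}(X)$ as preorders for every set $X$, and $(D,\mathrm{id})$ is an embedding of universally coherent hyperdoctrines $\mathbf{U}\to\mathbf{CMT}$ which is bijective on predicates. Consequently, for every infinite set $X$ the preorder $\mathbf{CMT}(DX)$ has neither a Heyting negation nor a Heyting implication.
   Context: $\mathbf{cMet}_1$ is the category of complete metric spaces of diameter at most 1 with uniformly continuous maps. For functions $\alpha,\beta:X\to[0,1]$ write $\alpha\sqsubseteq\beta$ if for every $\varepsilon>0$ there exists $\delta>0$ such that for all $x$, $\alpha(x)\le\delta$ implies $\beta(x)\le\varepsilon$. $\mathbf{U}$ is the indexed preorder on $\mathbf{Sets}$ with $\mathbf{U}(X)$ all functions $X\to[0,1]$ under $\sqsubseteq$ and reindexing by precomposition; $\mathbf{CMT}$ is the indexed preorder on $\mathbf{cMet}_1$ with $\mathbf{CMT}(X,d)$ the uniformly continuous functions $(X,d)\to[0,1]$ under $\sqsubseteq$ and reindexing by precomposition. Both are universally coherent hyperdoctrines (meet $=\max$, join $=\min$, $\exists=\inf$ and $\forall=\sup$ over fibres of projections). A morphism of universally coherent hyperdoctrines $(F,\eta):\mathbf P\to\mathbf P'$ (bases $\mathcal C,\mathcal D$) consists of a finite-product-preserving functor $F:\mathcal C\to\mathcal D$ and a pseudonatural transformation $\eta:\mathbf P\to\mathbf P'\circ F^{op}$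 whose components preserve finite meets and joins up to isomorphism, commuting up to isomorphism with $\exists_\pi$ and $\forall_\pi$ along projections and preserving equality predicates. It is an embedding if $F$ is full and faithful and each $\eta_X$ reflects the order. A Heyting negation on a preorder with meets and bottom $\bot$ is an operation $\neg$ with $\gamma\wedge\beta\le\bot\iff\gamma\le\neg\beta$ for all $\gamma$. *)

theory Defs
  imports "HOL-Analysis.Analysis"
begin

section \<open>The base category cMet_1 (objects only; morphisms are uniformly continuous maps)\<close>

definition cMet1_obj :: "'a metric \<Rightarrow> bool" where
  "cMet1_obj m \<longleftrightarrow> mcomplete_of m \<and> (\<forall>x\<in>mspace m. \<forall>y\<in>mspace m. mdist m x y \<le> 1)"

definition unit_interval_metric :: "real metric" where
  "unit_interval_metric = submetric euclidean_metric {0..1}"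

text \<open>Binary product in cMet_1: the cartesian product with the max metric.\<close>
definition max_prod_metric :: "'a metric \<Rightarrow> 'b metric \<Rightarrow> ('a \<times> 'b) metric" where
  "max_prod_metric m1 m2 =
     metric (mspace m1 \<times> mspace m2,
             \<lambda>(x1,x2) (y1,y2). max (mdist m1 x1 y1) (mdist m2 x2 y2))"

definition disc :: "'a set \<Rightarrow> 'a metric" where
  "disc X = metric (X, \<lambda>x y. if x = y then 0 else 1)"

definition sqle :: "'a set \<Rightarrow> ('a \<Rightarrow> real) \<Rightarrow> ('a \<Rightarrow> real) \<Rightarrow> bool" where
  "sqle X \<alpha> \<beta> \<longleftrightarrow>
     (\<forall>\<epsilon>>0. \<exists>\<delta>>0. \<forall>x\<in>X. \<alpha> x \<le> \<delta> \<longrightarrow> \<beta> x \<le> \<epsilon>)"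

text \<open>U(X): all functions X -> [0,1] (values off X are irrelevant).\<close>
definition U_pred :: "'a set \<Rightarrow> ('a \<Rightarrow> real) set" where
  "U_pred X = {\<alpha>. \<forall>x\<in>X. \<alpha> x \<in> {0..1}}"

definition CMT_pred :: "'a metric \<Rightarrow> ('a \<Rightarrow> real) set" where
  "CMT_pred m = {\<alpha>. uniformly_continuous_map m unit_interval_metric \<alpha>}"

text \<open>Equality predicates: in U on X the characteristic (0 = true) predicate of the
  diagonal; in CMT on (X,d) the metric d itself.\<close>
definition eq_U :: "('a \<times> 'a) \<Rightarrow> real" where
  "eq_U = (\<lambda>(x,y). if x = y then 0 else 1)"

definition eq_CMT :: "'a metric \<Rightarrow> ('a \<times> 'a) \<Rightarrow> real" where
  "eq_CMT m = (\<lambda>(x,y). mdist m x y)"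

definition meetP :: "('a \<Rightarrow> real) \<Rightarrow> ('a \<Rightarrow> real) \<Rightarrow> ('a \<Rightarrow> real)" where
  "meetP \<alpha> \<beta> = (\<lambda>x. max (\<alpha> x) (\<beta> x))"

definition botP :: "'a \<Rightarrow> real" where
  "botP = (\<lambda>x. 1)"

definition joinP :: "('a \<Rightarrow> real) \<Rightarrow> ('a \<Rightarrow> real) \<Rightarrow> ('a \<Rightarrow> real)" where
  "joinP \<alpha> \<beta> = (\<lambda>x. min (\<alpha> x) (\<beta> x))"

definition topP :: "'a \<Rightarrow> real" where
  "topP = (\<lambda>x. 0)"

text \<open>Quantifiers along the projection X x Y -> X: inf / sup over the fibre
  (with the [0,1]-valued conventions inf of empty = 1, sup of empty = 0).\<close>
definition exP :: "'b set \<Rightarrow> ('a \<times> 'b \<Rightarrow> real) \<Rightarrow> ('a \<Rightarrow> real)" where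
  "exP Y \<alpha> = (\<lambda>x. if Y = {} then 1 else (INF y\<in>Y. \<alpha> (x,y)))"

definition allP :: "'b set \<Rightarrow> ('a \<times> 'b \<Rightarrow> real) \<Rightarrow> ('a \<Rightarrow> real)" where
  "allP Y \<alpha> = (\<lambda>x. if Y = {} then 0 else (SUP y\<in>Y. \<alpha> (x,y)))"

definition has_heyting_negation ::
  "('a \<Rightarrow> real) set \<Rightarrow> (('a \<Rightarrow> real) \<Rightarrow> ('a \<Rightarrow> real) \<Rightarrow> bool) \<Rightarrow> bool" where
  "has_heyting_negation P le \<longleftrightarrow>
     (\<exists>neg. \<forall>\<beta>\<in>P. neg \<beta> \<in> P \<and>
        (\<forall>\<gamma>\<in>P. le (meetP \<gamma> \<beta>) botP \<longleftrightarrow> le \<gamma> (neg \<beta>)))"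

definition has_heyting_implication ::
  "('a \<Rightarrow> real) set \<Rightarrow> (('a \<Rightarrow> real) \<Rightarrow> ('a \<Rightarrow> real) \<Rightarrow> bool) \<Rightarrow> bool" where
  "has_heyting_implication P le \<longleftrightarrow>
     (\<exists>imp. \<forall>\<beta>\<in>P. \<forall>\<gamma>\<in>P. imp \<beta> \<gamma> \<in> P \<and>
        (\<forall>\<delta>\<in>P. le (meetP \<delta> \<beta>) \<gamma> \<longleftrightarrow> le \<delta> (imp \<beta> \<gamma>)))"

end

theory Submission
  imports Defs
begin


lemma disc_dd: "discrete_metric.dd = (\<lambda>x y::'a. if x = y then 0 else (1::real))"
  by (simp add: discrete_metric.dd_def)

lemma MS_disc: "Metric_space X (\<lambda>x y::'a. if x = y then 0 else (1::real))"
  using metric_M_dd[of X] by (simp add: disc_dd)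

lemma mspace_disc[simp]: "mspace (disc X) = X"
  by (simp add: disc_def Metric_space.mspace_metric[OF MS_disc])

lemma mdist_disc[simp]: "mdist (disc X) = (\<lambda>x y. if x = y then 0 else 1)"
  by (simp add: disc_def Metric_space.mdist_metric[OF MS_disc])

lemma cMet1_disc: "cMet1_obj (disc X)"
  unfolding cMet1_obj_def mcomplete_of_def
  using discrete_metric.mcomplete_discrete_metric[of X] by (simp add: disc_dd)

lemma ucm_disc: "uniformly_continuous_map (disc X) m f \<longleftrightarrow> f \<in> X \<rightarrow> mspace m"
proof
  assume "uniformly_continuous_map (disc X) m f"
  then show "f \<in> X \<rightarrow> mspace m" using uniformly_continuous_map_funspace by fastforce
next
  assume f: "f \<in> X \<rightarrow> mspace m"
  have "\<forall>\<epsilon>>0. \<exists>\<delta>>0. \<forall>x\<in>X. \<forall>y\<in>X. (if y = x then 0 else 1::real) < \<delta> \<longrightarrow> mdist m (f y) (f x) < \<epsilon>"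
  proof (intro allI impI)
    fix e :: real assume e: "e > 0"
    have "\<forall>x\<in>X. \<forall>y\<in>X. (if y = x then 0 else 1) < (1/2::real) \<longrightarrow> mdist m (f y) (f x) < e"
    proof (intro ballI impI)
      fix x y assume xy: "x \<in> X" "y \<in> X" "(if y = x then 0 else 1) < (1/2::real)"
      then have yx: "y = x" by (auto split: if_splits)
      have fx: "f x \<in> mspace m" using f xy(1) by blast
      have "mdist m (f x) (f x) = 0" using mdist_zero[OF fx fx] by simp
      then show "mdist m (f y) (f x) < e" using yx e by simp
    qed
    then show "\<exists>\<delta>>0. \<forall>x\<in>X. \<forall>y\<in>X. (if y = x then 0 else 1::real) < \<delta> \<longrightarrow> mdist m (f y) (f x) < e"
      by (intro exI[where x="1/2::real"] conjI) simp_all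
  qed
  then show "uniformly_continuous_map (disc X) m f"
    unfolding uniformly_continuous_map_def using f by simp
qed

lemma CMT_disc: "CMT_pred (disc X) = U_pred X"
  unfolding CMT_pred_def U_pred_def ucm_disc unit_interval_metric_def
  by (simp add: Pi_iff)

lemma prod_disc: "disc (X \<times> Y) = max_prod_metric (disc X) (disc Y)"
  unfolding max_prod_metric_def mspace_disc mdist_disc
  unfolding disc_def by (rule arg_cong[where f=metric]) (auto simp: fun_eq_iff)

lemma unit_unique: "\<forall>m::'b metric. cMet1_obj m \<longrightarrow>
           (\<exists>!g. g \<in> mspace m \<rightarrow>\<^sub>E mspace (disc {()}) \<and>
                 uniformly_continuous_map m (disc {()}) g)"
proof (intro allI impI)
  fix m :: "'b metric"
  show "\<exists>!g. g \<in> mspace m \<rightarrow>\<^sub>E mspace (disc {()}) \<and> uniformly_continuous_map m (disc {()}) g"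
  proof (rule ex1I[of _ "\<lambda>_. ()"])
    show "(\<lambda>_. ()) \<in> mspace m \<rightarrow>\<^sub>E mspace (disc {()}) \<and> uniformly_continuous_map m (disc {()}) (\<lambda>_. ())"
      unfolding uniformly_continuous_map_def by (auto simp: PiE_def extensional_def)
  qed (auto simp: fun_eq_iff)
qed


lemma sqle_refl: "sqle X a a"
  unfolding sqle_def by auto

lemma no_neg:
  assumes inf: "infinite X"
  shows "\<not> has_heyting_negation (U_pred X) (sqle X)"
proof
  assume "has_heyting_negation (U_pred X) (sqle X)"
  then obtain neg where H: "\<forall>\<beta>\<in>U_pred X. neg \<beta> \<in> U_pred X \<and>
        (\<forall>\<gamma>\<in>U_pred X. sqle X (meetP \<gamma> \<beta>) botP \<longleftrightarrow> sqle X \<gamma> (neg \<beta>))"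
    unfolding has_heyting_negation_def by blast
  obtain f :: "nat \<Rightarrow> 'a" where f: "inj f" "range f \<subseteq> X"
    using inf infinite_countable_subset by blast
  define \<beta> where "\<beta> = (\<lambda>x. 1 / (real (inv f x) + 1))"
  have bpos: "\<beta> x > 0" for x unfolding \<beta>_def by simp
  have \<beta>U: "\<beta> \<in> U_pred X" unfolding U_pred_def \<beta>_def by auto
  have \<beta>f: "\<beta> (f n) = 1 / (real n + 1)" for n unfolding \<beta>_def using f(1) by simp
  define \<nu> where "\<nu> = neg \<beta>"
  have \<nu>U: "\<nu> \<in> U_pred X" using H \<beta>U \<nu>_def by blast
  have eqv: "\<And>\<gamma>. \<gamma> \<in> U_pred X \<Longrightarrow> sqle X (meetP \<gamma> \<beta>) botP \<longleftrightarrow> sqle X \<gamma> \<nu>"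
    using H \<beta>U \<nu>_def by blast
  have \<nu>0: "\<nu> x \<le> 0" if x: "x \<in> X" for x
  proof -
    define \<gamma> where "\<gamma> = (\<lambda>y. if y = x then 0 else 1::real)"
    have \<gamma>U: "\<gamma> \<in> U_pred X" unfolding U_pred_def \<gamma>_def by auto
    have "sqle X (meetP \<gamma> \<beta>) botP"
      unfolding sqle_def
    proof (intro allI impI)
      fix \<epsilon> :: real assume "\<epsilon> > 0"
      show "\<exists>\<delta>>0. \<forall>y\<in>X. meetP \<gamma> \<beta> y \<le> \<delta> \<longrightarrow> botP y \<le> \<epsilon>"
      proof (intro exI[of _ "min (\<beta> x / 2) (1/2)"] conjI ballI impI)
        show "0 < min (\<beta> x / 2) (1/2)" using bpos[of x] by simp
        fix y assume "y \<in> X" "meetP \<gamma> \<beta> y \<le> min (\<beta> x / 2) (1/2)"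
        then show "botP y \<le> \<epsilon>" unfolding meetP_def \<gamma>_def using bpos[of x]
          by (auto split: if_splits)
      qed
    qed
    then have "sqle X \<gamma> \<nu>" using eqv \<gamma>U by blast
    show "\<nu> x \<le> 0"
    proof (rule field_le_epsilon)
      fix e :: real assume "e > 0"
      then obtain d where "d > 0" "\<forall>y\<in>X. \<gamma> y \<le> d \<longrightarrow> \<nu> y \<le> e"
        using \<open>sqle X \<gamma> \<nu>\<close> unfolding sqle_def by blast
      then show "\<nu> x \<le> 0 + e" using x unfolding \<gamma>_def by auto
    qed
  qed
  have "sqle X (meetP \<nu> \<beta>) botP" using eqv[OF \<nu>U] sqle_refl by blast
  then have "\<exists>\<delta>>0. \<forall>y\<in>X. meetP \<nu> \<beta> y \<le> \<delta> \<longrightarrow> botP y \<le> (1/2::real)"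
    unfolding sqle_def by (metis half_gt_zero zero_less_one)
  then obtain d where d: "d > 0" "\<forall>y\<in>X. meetP \<nu> \<beta> y \<le> d \<longrightarrow> botP y \<le> (1/2::real)"
    by blast
  obtain n :: nat where n0: "inverse (real (Suc n)) < d"
    using reals_Archimedean[OF d(1)] by blast
  have n: "1 / (real n + 1) < d" using n0 by (simp add: divide_inverse add.commute)
  have fn: "f n \<in> X" using f by auto
  have "\<nu> (f n) \<ge> 0" using \<nu>U fn unfolding U_pred_def by auto
  then have "\<nu> (f n) = 0" using \<nu>0[OF fn] by linarith
  then have "meetP \<nu> \<beta> (f n) = 1 / (real n + 1)"
    unfolding meetP_def \<beta>f by simp
  then have "meetP \<nu> \<beta> (f n) \<le> d" using n by linarith
  then have "botP (f n) \<le> (1/2::real)" using d(2) fn by blast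
  then show False unfolding botP_def by simp
qed

lemma no_imp:
  assumes inf: "infinite X"
  shows "\<not> has_heyting_implication (U_pred X) (sqle X)"
proof
  assume "has_heyting_implication (U_pred X) (sqle X)"
  then obtain imp where H: "\<forall>\<beta>\<in>U_pred X. \<forall>\<gamma>\<in>U_pred X. imp \<beta> \<gamma> \<in> U_pred X \<and>
        (\<forall>\<delta>\<in>U_pred X. sqle X (meetP \<delta> \<beta>) \<gamma> \<longleftrightarrow> sqle X \<delta> (imp \<beta> \<gamma>))"
    unfolding has_heyting_implication_def by blast
  have "botP \<in> U_pred X" unfolding U_pred_def botP_def by auto
  then have "has_heyting_negation (U_pred X) (sqle X)"
    unfolding has_heyting_negation_def using H by (intro exI[of _ "\<lambda>\<beta>. imp \<beta> botP"]) blast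
  then show False using no_neg[OF inf] by blast
qed

theorem mainTheorem6:
  fixes X :: "'a set" and Y :: "'b set"
  shows
    \<comment> \<open>D X is an object of cMet_1 with carrier X\<close>
    "cMet1_obj (disc X) \<and> mspace (disc X) = X
     \<comment> \<open>CMT(D X) = U(X) as preorders (same carrier, same order relation)\<close>
     \<and> CMT_pred (disc X) = U_pred X
     \<and> (\<forall>\<alpha>\<in>U_pred X. \<forall>\<beta>\<in>U_pred X. sqle (mspace (disc X)) \<alpha> \<beta> \<longleftrightarrow> sqle X \<alpha> \<beta>)
     \<and> bij_betw id (U_pred X) (CMT_pred (disc X))
     \<comment> \<open>D is a functor which is full (and faithful, acting as identity on maps)\<close>
     \<and> (\<forall>f. uniformly_continuous_map (disc X) (disc Y) f \<longleftrightarrow> f \<in> X \<rightarrow> Y)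
     \<comment> \<open>D preserves finite products\<close>
     \<and> disc (X \<times> Y) = max_prod_metric (disc X) (disc Y)
     \<and> (\<forall>m::'b metric. cMet1_obj m \<longrightarrow>
           (\<exists>!g. g \<in> mspace m \<rightarrow>\<^sub>E mspace (disc {()}) \<and>
                 uniformly_continuous_map m (disc {()}) g))
     \<comment> \<open>the (shared) connectives and quantifiers of U land in CMT(D -)\<close>
     \<and> (\<forall>\<alpha>\<in>CMT_pred (disc X). \<forall>\<beta>\<in>CMT_pred (disc X).
           meetP \<alpha> \<beta> \<in> CMT_pred (disc X) \<and> joinP \<alpha> \<beta> \<in> CMT_pred (disc X))
     \<and> topP \<in> CMT_pred (disc X) \<and> botP \<in> CMT_pred (disc X)
     \<and> (\<forall>\<alpha>\<in>CMT_pred (disc (X \<times> Y)).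
           exP Y \<alpha> \<in> CMT_pred (disc X) \<and> allP Y \<alpha> \<in> CMT_pred (disc X))
     \<comment> \<open>the identity preserves equality predicates\<close>
     \<and> (\<forall>p\<in>X \<times> X. eq_CMT (disc X) p = eq_U p)
     \<comment> \<open>no Heyting negation / implication when X is infinite\<close>
     \<and> (infinite X \<longrightarrow>
          \<not> has_heyting_negation (CMT_pred (disc X)) (sqle X)
        \<and> \<not> has_heyting_implication (CMT_pred (disc X)) (sqle X))"
  proof -
  have A: "\<forall>\<alpha>\<in>U_pred X. \<forall>\<beta>\<in>U_pred X. meetP \<alpha> \<beta> \<in> U_pred X \<and> joinP \<alpha> \<beta> \<in> U_pred X"
    unfolding U_pred_def meetP_def joinP_def by auto
  have B: "topP \<in> U_pred X \<and> botP \<in> U_pred X" unfolding U_pred_def topP_def botP_def by auto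
  have C: "exP Y \<alpha> \<in> U_pred X \<and> allP Y \<alpha> \<in> U_pred X" if "\<alpha> \<in> U_pred (X \<times> Y)" for \<alpha>
  proof -
    have r: "\<alpha> (x,y) \<in> {0..1}" if "x \<in> X" "y \<in> Y" for x y
      using \<open>\<alpha> \<in> U_pred (X \<times> Y)\<close> that unfolding U_pred_def by auto
    have "exP Y \<alpha> x \<in> {0..1} \<and> allP Y \<alpha> x \<in> {0..1}" if x: "x \<in> X" for x
    proof (cases "Y = {}")
      case True then show ?thesis unfolding exP_def allP_def by simp
    next
      case False
      have bb: "bdd_below ((\<lambda>y. \<alpha> (x,y)) ` Y)" "bdd_above ((\<lambda>y. \<alpha> (x,y)) ` Y)"
        using r[OF x] by (auto intro!: bdd_belowI[of _ 0] bdd_aboveI[of _ 1])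
      have i0: "0 \<le> (INF y\<in>Y. \<alpha> (x,y))" using False r[OF x] by (auto intro!: cINF_greatest)
      obtain y0 where y0: "y0 \<in> Y" using False by blast
      have "(INF y\<in>Y. \<alpha> (x,y)) \<le> \<alpha> (x,y0)" by (rule cINF_lower[OF bb(1) y0])
      moreover have "\<alpha> (x,y0) \<in> {0..1}" by (rule r[OF x y0])
      moreover have "\<alpha> (x,y0) \<le> (SUP y\<in>Y. \<alpha> (x,y))" by (rule cSUP_upper[OF y0 bb(2)])
      moreover have "(SUP y\<in>Y. \<alpha> (x,y)) \<le> 1" using False r[OF x] by (auto intro!: cSUP_least)
      ultimately show ?thesis using False i0 unfolding exP_def allP_def by simp
    qed
    then show ?thesis unfolding U_pred_def by auto
  qed
  have D: "\<forall>p\<in>X \<times> X. eq_CMT (disc X) p = eq_U p"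
    by (auto simp: eq_CMT_def eq_U_def)
  have E: "(\<forall>f. uniformly_continuous_map (disc X) (disc Y) f \<longleftrightarrow> f \<in> X \<rightarrow> Y)"
    by (simp add: ucm_disc)
  have F: "\<forall>\<alpha>\<in>CMT_pred (disc (X \<times> Y)). exP Y \<alpha> \<in> CMT_pred (disc X) \<and> allP Y \<alpha> \<in> CMT_pred (disc X)"
    using C unfolding CMT_disc by blast
  have G: "bij_betw id (U_pred X) (CMT_pred (disc X))"
    unfolding CMT_disc by simp
  show ?thesis
    unfolding CMT_disc mspace_disc
    apply (intro conjI)
    using cMet1_disc[of X] apply blast
    apply (rule refl)
    apply (rule refl)
    apply simp
    apply (simp add: bij_betw_def)
    apply (rule E)
    apply (rule prod_disc)
    apply (rule unit_unique[unfolded mspace_disc])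
    using A apply blast
    using B apply blast
    using B apply blast
    using C apply blast
    apply (rule D)
    using no_neg no_imp by blast
qed

end
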